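(* Fix an integer $n\ge 1$. For $m>n$ let \[ \begin{split}\delta_{m,n}(p) &= 9 + n (m^2 (2 + n)^2 + 3 (4 + n) - 2 m (5 + 2n)) - 24 p - n (12 + m^2 (2 + n) + 2 m n (3 + n)) p \\ &\qquad{}+(22 + n (8 + 2 m (1 + n) + n (3 + n))) p^2 - (8 + n (2 + n)) p^3 + p^4 ,\end{split} \] and let $p^*(m,n)$ be the real root of $\delta_{m,n}(p)=0$ that grows with $m$ (of order $m^{2/3}$). Then as $m\to\infty$, \[ p^*(m,n) = m^{2/3} (n (2 + n))^{1/3} - m^{1/3}\cdot\frac{2 n (1 + n)}{3 (n (2 + n))^{1/3}} + \frac{1}{3}(6 + n + n^2) - m^{-1/3}\cdot\frac{2 n^2 (216 + 230 n + 87 n^2 + 24 n^3 + 5 n^4)}{81 (n (2 + n))^{5/3}} + o(m^{-1/3}). \]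
   Context: $\delta_{m,n}(p)$ is a quartic polynomial in $p$ whose appropriate root (rounded) gives the optimal training-set size for a linear regression with $m$ Gaussian data points of dimension $n$. *)

theory Defs
  imports Complex_Main "HOL-Library.Landau_Symbols"
begin

definition delta :: "real \<Rightarrow> real \<Rightarrow> real \<Rightarrow> real" where
  "delta m n p =
     9 + n * (m^2 * (2 + n)^2 + 3 * (4 + n) - 2 * m * (5 + 2*n)) - 24 * p
     - n * (12 + m^2 * (2 + n) + 2 * m * n * (3 + n)) * p
     + (22 + n * (8 + 2 * m * (1 + n) + n * (3 + n))) * p^2
     - (8 + n * (2 + n)) * p^3 + p^4"

definition pstar_approx :: "real \<Rightarrow> real \<Rightarrow> real" where
  "pstar_approx m n =
     m powr (2/3) * (n * (2 + n)) powr (1/3)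
     - m powr (1/3) * (2 * n * (1 + n)) / (3 * (n * (2 + n)) powr (1/3))
     + (6 + n + n^2) / 3
     - m powr (-1/3) * (2 * n^2 * (216 + 230*n + 87*n^2 + 24*n^3 + 5*n^4))
         / (81 * (n * (2 + n)) powr (5/3))"

end

theory Submission imports Defs "HOL-Real_Asymp.Real_Asymp" begin

definition Gq :: "real \<Rightarrow> real \<Rightarrow> real \<Rightarrow> real" where
 "Gq N q u = 9*u^8 + N*(2+N)^2*u^2 + 3*N*(4+N)*u^8 - 2*N*(5+2*N)*u^5 - 24*q*u^6
   - N*(12*q*u^6 + (2+N)*q + 2*N*(3+N)*q*u^3)
   + (22 + 8*N + N^2*(3+N))*q^2*u^4 + 2*N*(1+N)*q^2*u
   - (8 + N*(2+N))*q^3*u^2 + q^4"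

definition Xf :: "real \<Rightarrow> real \<Rightarrow> real \<Rightarrow> real \<Rightarrow> real" where
 "Xf N a w u = a - (2/3)*N*(1+N)*w*a^2*u + (1/3)*(6+N+N^2)*u^2 - (2/81)*N^2*(216+230*N+87*N^2+24*N^3+5*N^4)*w^2*a*u^3"

definition Rp :: "real \<Rightarrow> real \<Rightarrow> real \<Rightarrow> real \<Rightarrow> real" where
 "Rp N a w u = (-26/9)*a^2 + (-64/81)*a^2*w + (-80/81)*a^2*N + (176/81)*a^2*N*w + (128/81)*a^2*N*w^2 + (-131/81)*a^2*N^2 + (-2/9)*a^2*N^3 + (-7/81)*a^2*N^4 + (320/81)*u + (512/243)*u*w + (-254/243)*u*N + (-2176/243)*u*N*w + (-1024/243)*u*N*w^2 + (1256/243)*u*N^2 + (844/243)*u*N^3 + (596/243)*u*N^4 + (100/243)*u*N^5 + (28/243)*u*N^6 + (-22328/2187)*u^2*a + (-3712/729)*u^2*a*w + (-2048/2187)*u^2*a*w^2 + (2288/243)*u^2*a*N + (5552/243)*u^2*a*N*w + (23296/2187)*u^2*a*N*w^2 + (4096/2187)*u^2*a*N*w^3 + (-1468/729)*u^2*a*N^2 + (292/729)*u^2*a*N^3 + (-1163/729)*u^2*a*N^4 + (-14/81)*u^2*a*N^5 + (-209/2187)*u^2*a*N^6 + (15976/729)*u^3*a^2 + (4736/729)*u^3*a^2*w + (-1024/729)*u^3*a^2*w^2 + (-4096/2187)*u^3*a^2*w^3 + (-11680/2187)*u^3*a^2*N + (-79760/2187)*u^3*a^2*N*w + (-27392/2187)*u^3*a^2*N*w^2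 + (8192/2187)*u^3*a^2*N*w^3 + (8192/2187)*u^3*a^2*N*w^4 + (14888/2187)*u^3*a^2*N^2 + (-46/2187)*u^3*a^2*N^3 + (2726/2187)*u^3*a^2*N^4 + (182/2187)*u^3*a^2*N^5 + (130/2187)*u^3*a^2*N^6 + (-59837/19683)*u^4 + (135424/19683)*u^4*w + (40960/6561)*u^4*w^2 + (32768/19683)*u^4*w^3 + (59036/19683)*u^4*N + (34880/6561)*u^4*N*w + (-328192/19683)*u^4*N*w^2 + (-262144/19683)*u^4*N*w^3 + (-65536/19683)*u^4*N*w^4 + (-182981/19683)*u^4*N^2 + (-80008/19683)*u^4*N^3 + (-80374/19683)*u^4*N^4 + (-17362/19683)*u^4*N^5 + (-11794/19683)*u^4*N^6 + (-410/6561)*u^4*N^7 + (-466/19683)*u^4*N^8 + (22400/19683)*u^5*a + (-5225984/531441)*u^5*a*w + (-3301376/531441)*u^5*a*w^2 + (-65536/177147)*u^5*a*w^3 + (262144/531441)*u^5*a*w^4 + (-2354240/177147)*u^5*a*N + (1013248/531441)*u^5*a*N*w + (12061696/531441)*u^5*a*N*w^2 + (2244608/177147)*u^5*a*N*w^3 + (262144/531441)*u^5*a*N*w^4 + (-524288/531441)*u^5*a*N*w^5 + (-697120/177147)*u^5*a*N^2 + (-219196/59049)*u^5*a*N^3 + (72554/531441)*u^5*a*N^4 + (-75968/531441)*u^5*a*N^5 + (19936/177147)*u^5*a*N^6 + (3460/531441)*u^5*a*N^7 + (2750/531441)*u^5*a*N^8 + (-845320/177147)*u^6*a^2 + (572512/177147)*u^6*a^2*w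 + (707584/177147)*u^6*a^2*w^2 + (-100352/177147)*u^6*a^2*w^3 + (-131072/59049)*u^6*a^2*w^4 + (-1048576/1594323)*u^6*a^2*w^5 + (-246304/531441)*u^6*a^2*N + (2044960/1594323)*u^6*a^2*N*w + (-13422016/1594323)*u^6*a^2*N*w^2 + (-12661760/1594323)*u^6*a^2*N*w^3 + (3444736/1594323)*u^6*a^2*N*w^4 + (7602176/1594323)*u^6*a^2*N*w^5 + (2097152/1594323)*u^6*a^2*N*w^6 + (-1143004/531441)*u^6*a^2*N^2 + (-63944/177147)*u^6*a^2*N^3 + (-486932/1594323)*u^6*a^2*N^4 + (-67184/1594323)*u^6*a^2*N^5 + (-2476/177147)*u^6*a^2*N^6 + (-1960/1594323)*u^6*a^2*N^7 + (-100/1594323)*u^6*a^2*N^8 + (901760/531441)*u^7 + (-1853440/531441)*u^7*w + (-163840/177147)*u^7*w^2 + (524288/531441)*u^7*w^3 + (524288/1594323)*u^7*w^4 + (-1908416/1594323)*u^7*N + (-2892544/1594323)*u^7*N*w + (12021760/1594323)*u^7*N*w^2 + (2228224/1594323)*u^7*N*w^3 + (-3407872/1594323)*u^7*N*w^4 + (-1048576/1594323)*u^7*N*w^5 + (2076832/531441)*u^7*N^2 + (31888/177147)*u^7*N^3 + (172280/531441)*u^7*N^4 + (-170368/1594323)*u^7*N^5 + (-64808/531441)*u^7*N^6 + (-45872/1594323)*u^7*N^7 + (-28520/1594323)*u^7*N^8 + (-800/531441)*u^7*N^9 + (-1000/1594323)*u^7*N^10 + (-55304320/43046721)*u^8*a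 + (48410368/14348907)*u^8*a*w + (6163456/14348907)*u^8*a*w^2 + (-77398016/43046721)*u^8*a*w^3 + (-11141120/43046721)*u^8*a*w^4 + (5242880/14348907)*u^8*a*w^5 + (4194304/43046721)*u^8*a*w^6 + (314284448/43046721)*u^8*a*N + (44362496/43046721)*u^8*a*N*w + (-102728704/14348907)*u^8*a*N*w^2 + (-493568/43046721)*u^8*a*N*w^3 + (162070528/43046721)*u^8*a*N*w^4 + (4980736/14348907)*u^8*a*N*w^5 + (-33554432/43046721)*u^8*a*N*w^6 + (-8388608/43046721)*u^8*a*N*w^7 + (59812016/14348907)*u^8*a*N^2 + (51265280/14348907)*u^8*a*N^3 + (23001536/14348907)*u^8*a*N^4 + (26832448/43046721)*u^8*a*N^5 + (9157216/43046721)*u^8*a*N^6 + (1972480/43046721)*u^8*a*N^7 + (510400/43046721)*u^8*a*N^8 + (52000/43046721)*u^8*a*N^9 + (10000/43046721)*u^8*a*N^10"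

definition k1 :: "real \<Rightarrow> real \<Rightarrow> real" where
 "k1 N u = -24*u^6 - N*(12*u^6 + (2+N) + 2*N*(3+N)*u^3)"
definition k2 :: "real \<Rightarrow> real \<Rightarrow> real" where
 "k2 N u = (22 + 8*N + N^2*(3+N))*u^4 + 2*N*(1+N)*u"
definition k3 :: "real \<Rightarrow> real \<Rightarrow> real" where
 "k3 N u = -(8 + N*(2+N))*u^2"
definition k0 :: "real \<Rightarrow> real \<Rightarrow> real" where
 "k0 N u = 9*u^8 + N*(2+N)^2*u^2 + 3*N*(4+N)*u^8 - 2*N*(5+2*N)*u^5"

definition Fq :: "real \<Rightarrow> real \<Rightarrow> real \<Rightarrow> real \<Rightarrow> real" where
 "Fq N X y u = (k1 N u + 2*k2 N u*X + 3*k3 N u*X^2 + 4*X^3) + (k2 N u + 3*k3 N u*X + 6*X^2)*y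
   + (k3 N u + 4*X)*y^2 + y^3"

lemma Gq_k: "Gq N q u = k0 N u + k1 N u * q + k2 N u * q^2 + k3 N u * q^3 + q^4"
  unfolding Gq_def k0_def k1_def k2_def k3_def by algebra

lemma Gq_eq: "m * u^3 = 1 \<Longrightarrow> p * u^2 = q \<Longrightarrow> delta m N p * u^8 = Gq N q u"
  unfolding delta_def Gq_def by algebra

lemma Gq_taylor: "Gq N (X + y) u = Gq N X u + y * Fq N X y u"
  unfolding Gq_k Fq_def by algebra

lemma crux: fixes a N w u :: real
  assumes "a^3 = N^2 + 2*N" "w*(N^2+2*N) = 1"
  shows "Gq N (Xf N a w u) u = u^4 * Rp N a w u"
  using assms unfolding Gq_def Xf_def Rp_def by algebra

lemma pstar_eq:
  fixes a N w u x :: real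
  assumes "a > 0" "a^3 = N*(2+N)" "w*(N*(2+N)) = 1" "u > 0"
  shows "(1/u^2) * a - (1/u) * (2 * N * (1 + N)) / (3 * a) + (6 + N + N^2) / 3
     - u * (2 * N^2 * (216 + 230*N + 87*N^2 + 24*N^3 + 5*N^4)) / (81 * a^5)
     = Xf N a w u / u^2"
proof -
  have h1: "a^2*w*a = 1" using assms by algebra
  have h5: "a*w^2*a^5 = 1" using assms by algebra
  have i1: "1/a = a^2*w" using h1 assms(1) by (simp add: field_simps)
  have i5: "1/a^5 = a*w^2" using h5 assms(1) by (simp add: field_simps)
  have a0: "a \<noteq> 0" "u \<noteq> 0" using assms by auto
  show ?thesis unfolding Xf_def using a0 apply (simp add: field_simps)
    using assms(2,3) by algebra
qed

lemma bz:
  fixes g f :: "'a \<Rightarrow> real"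
  assumes "(g \<longlongrightarrow> 0) F" "eventually (\<lambda>x. \<bar>f x\<bar> \<le> C) F"
  shows "((\<lambda>x. g x * f x) \<longlongrightarrow> 0) F"
proof (rule tendsto_0_le[OF assms(1), of _ C])
  show "\<forall>\<^sub>F x in F. norm (g x * f x) \<le> norm (g x) * C"
    using assms(2) by eventually_elim (auto simp: abs_mult intro!: mult_left_mono)
qed

lemma u_facts:
  fixes x :: real assumes "x > 0"
  shows "x * (x powr (-1/3))^3 = 1" "x powr (2/3) = 1 / (x powr (-1/3))^2"
    "x powr (1/3) = 1 / x powr (-1/3)"
proof -
  have e3: "(x powr (-1/3))^3 = x powr (-1)"
    using powr_power[of x "-1/3" 3] assms by simp
  have e2: "(x powr (-1/3))^2 = x powr (-2/3)"
    using powr_power[of x "-1/3" 2] assms by simp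
  show "x * (x powr (-1/3))^3 = 1" using assms unfolding e3 by (simp add: powr_minus)
  show "x powr (2/3) = 1 / (x powr (-1/3))^2" unfolding e2 using assms by (simp add: powr_minus field_simps)
  show "x powr (1/3) = 1 / x powr (-1/3)" using assms by (simp add: powr_minus field_simps)
qed

theorem corollary1:
  fixes n :: nat and p :: "nat \<Rightarrow> real"
  assumes "n \<ge> 1"
    and "\<forall>\<^sub>F m in at_top. delta (real m) (real n) (p m) = 0"
    and "p \<in> \<Theta>[at_top](\<lambda>m. real m powr (2/3))"
  shows "(\<lambda>m. p m - pstar_approx (real m) (real n)) \<in> o[at_top](\<lambda>m. real m powr (-1/3))"
proof -
  define N where "N = real n"
  have N1: "N \<ge> 1" using assms(1) by (simp add: N_def)
  define s where "s = N*(2+N)"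
  have s0: "s > 0" using N1 by (simp add: s_def)
  define a where "a = s powr (1/3)"
  have a0: "a > 0" using s0 by (simp add: a_def)
  have a3: "a^3 = s" using powr_power[of s "1/3" 3] s0 by (simp add: a_def)
  have a5: "s powr (5/3) = a^5" using powr_power[of s "1/3" 5] s0 by (simp add: a_def)
  define w where "w = 1/s"
  have ws: "w*s = 1" using s0 by (simp add: w_def)
  define u where "u = (\<lambda>m::nat. real m powr (-1/3))"
  define q where "q = (\<lambda>m. p m * u m ^2)"
  define X where "X = (\<lambda>m. Xf N a w (u m))"
  define y where "y = (\<lambda>m. q m - X m)"
  have evpos: "eventually (\<lambda>m::nat. m > 0) at_top" by (simp add: eventually_gt_at_top)
  have upos: "u m > 0" if "m > 0" for m using that by (simp add: u_def)
  have ulim: "(u \<longlongrightarrow> 0) at_top" unfolding u_def by real_asymp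
  have uf: "real m * (u m)^3 = 1" "real m powr (2/3) = 1 / (u m)^2" "real m powr (1/3) = 1 / u m"
    if "m > 0" for m using u_facts[of "real m"] that by (simp_all add: u_def)
  have Gz: "eventually (\<lambda>m. Gq N (q m) (u m) = 0) at_top"
    using assms(2) evpos
  proof eventually_elim
    case (elim m)
    have "delta (real m) N (p m) * u m ^ 8 = Gq N (q m) (u m)"
      by (rule Gq_eq) (use uf(1)[OF elim(2)] in \<open>simp_all add: q_def\<close>)
    then show ?case using elim(1) by (simp add: N_def)
  qed
  obtain C where C: "C > 0" "eventually (\<lambda>m. norm (p m) \<le> C * norm (real m powr (2/3))) at_top"
    using landau_o.bigE[OF bigthetaD1[OF assms(3)]] by blast
  obtain c where c: "c > 0" "eventually (\<lambda>m. norm (p m) \<ge> c * norm (real m powr (2/3))) at_top"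
    using landau_omega.bigE[OF bigthetaD2[OF assms(3)]] by blast
  have qC: "eventually (\<lambda>m. \<bar>q m\<bar> \<le> C) at_top"
    using C(2) evpos
  proof eventually_elim
    case (elim m)
    have "\<bar>q m\<bar> = \<bar>p m\<bar> * u m ^ 2" using upos[OF elim(2)] by (simp add: q_def abs_mult)
    also have "\<dots> \<le> C * (1 / u m ^ 2) * u m ^ 2"
      using elim(1) uf(2)[OF elim(2)] upos[OF elim(2)] by (intro mult_right_mono) auto
    also have "\<dots> = C" using upos[OF elim(2)] by simp
    finally show ?case .
  qed
  have qc: "eventually (\<lambda>m. \<bar>q m\<bar> \<ge> c) at_top"
    using c(2) evpos
  proof eventually_elim
    case (elim m)
    have "c = c * (1 / u m ^ 2) * u m ^ 2" using upos[OF elim(2)] by simp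
    also have "\<dots> \<le> \<bar>p m\<bar> * u m ^ 2"
      using elim(1) uf(2)[OF elim(2)] upos[OF elim(2)] by (intro mult_right_mono) auto
    also have "\<dots> = \<bar>q m\<bar>" using upos[OF elim(2)] by (simp add: q_def abs_mult)
    finally show ?case .
  qed
  have qC2: "eventually (\<lambda>m. \<bar>q m ^ 2\<bar> \<le> C^2) at_top"
    using qC by eventually_elim (metis abs_ge_zero power_abs power_mono)
  have qC3: "eventually (\<lambda>m. \<bar>q m ^ 3\<bar> \<le> C^3) at_top"
    using qC by eventually_elim (metis abs_ge_zero power_abs power_mono)
  have l0: "((\<lambda>m. k0 N (u m)) \<longlongrightarrow> 0) at_top"
    unfolding k0_def
    by (auto intro!: tendsto_eq_intros ulim)
  have l1: "((\<lambda>m. k1 N (u m) + s) \<longlongrightarrow> 0) at_top"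
    unfolding k1_def s_def by (auto intro!: tendsto_eq_intros ulim)
  have l2: "((\<lambda>m. k2 N (u m)) \<longlongrightarrow> 0) at_top"
    unfolding k2_def by (auto intro!: tendsto_eq_intros ulim)
  have l3: "((\<lambda>m. k3 N (u m)) \<longlongrightarrow> 0) at_top"
    unfolding k3_def by (auto intro!: tendsto_eq_intros ulim)
  have q4: "((\<lambda>m. q m ^ 4 - s * q m) \<longlongrightarrow> 0) at_top"
  proof -
    have "((\<lambda>m. - (k0 N (u m) + (k1 N (u m) + s) * q m + k2 N (u m) * q m ^ 2 + k3 N (u m) * q m ^ 3)) \<longlongrightarrow> - (0 + 0 + 0 + 0)) at_top"
      by (intro tendsto_intros l0 bz[OF l1 qC] bz[OF l2 qC2] bz[OF l3 qC3])
    moreover have "eventually (\<lambda>m. - (k0 N (u m) + (k1 N (u m) + s) * q m + k2 N (u m) * q m ^ 2 + k3 N (u m) * q m ^ 3) = q m ^ 4 - s * q m) at_top"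
      using Gz by eventually_elim (simp add: Gq_k algebra_simps)
    ultimately show ?thesis using tendsto_cong by force
  qed
  have q3: "((\<lambda>m. q m ^ 3) \<longlongrightarrow> s) at_top"
  proof -
    have iq: "eventually (\<lambda>m. \<bar>1 / q m\<bar> \<le> 1 / c) at_top"
      using qc by eventually_elim (use c(1) in \<open>simp add: frac_le\<close>)
    have "((\<lambda>m. (q m ^ 4 - s * q m) * (1 / q m) + s) \<longlongrightarrow> 0 + s) at_top"
      by (intro tendsto_intros bz[OF q4 iq])
    moreover have "eventually (\<lambda>m. (q m ^ 4 - s * q m) * (1 / q m) + s = q m ^ 3) at_top"
      using qc by eventually_elim (use c(1) in \<open>auto simp: field_simps power_def\<close>)
    ultimately show ?thesis using tendsto_cong by force
  qed
  have qlim: "(q \<longlongrightarrow> a) at_top"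
  proof -
    have "((\<lambda>m. root 3 (q m ^ 3)) \<longlongrightarrow> root 3 s) at_top" by (intro tendsto_intros q3)
    moreover have "root 3 s = a" using s0 by (simp add: a_def root_powr_inverse)
    ultimately show ?thesis by (simp add: odd_real_root_power_cancel)
  qed
  have Xlim: "(X \<longlongrightarrow> a) at_top"
    unfolding X_def Xf_def by (auto intro!: tendsto_eq_intros ulim)
  have ylim: "(y \<longlongrightarrow> 0) at_top"
    unfolding y_def using tendsto_diff[OF qlim Xlim] by simp
  have Flim: "((\<lambda>m. Fq N (X m) (y m) (u m)) \<longlongrightarrow> 3 * s) at_top"
  proof -
    have "((\<lambda>m. Fq N (X m) (y m) (u m)) \<longlongrightarrow> Fq N a 0 0) at_top"
      unfolding Fq_def k1_def k2_def k3_def by (intro tendsto_intros Xlim ylim ulim)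
    moreover have "Fq N a 0 0 = 3 * s" using a3 by (simp add: Fq_def k1_def k2_def k3_def s_def)
    ultimately show ?thesis by simp
  qed
  have Rlim: "((\<lambda>m. u m * Rp N a w (u m)) \<longlongrightarrow> 0 * Rp N a w 0) at_top"
    unfolding Rp_def by (intro tendsto_intros ulim)
  have Fpos: "eventually (\<lambda>m. Fq N (X m) (y m) (u m) > 0) at_top"
    using order_tendstoD(1)[OF Flim] s0 by simp
  have lim: "((\<lambda>m. - (u m * Rp N a w (u m)) / Fq N (X m) (y m) (u m)) \<longlongrightarrow> - (0 * Rp N a w 0) / (3 * s)) at_top"
    using s0 by (intro tendsto_intros Rlim Flim) auto
  have ev: "eventually (\<lambda>m. (p m - pstar_approx (real m) N) / u m
      = - (u m * Rp N a w (u m)) / Fq N (X m) (y m) (u m)) at_top"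
    using Gz Fpos evpos
  proof eventually_elim
    case (elim m)
    have u0: "u m > 0" using upos elim(3) .
    have "0 = Gq N (X m + y m) (u m)" using elim(1) by (simp add: y_def)
    also have "\<dots> = u m ^ 4 * Rp N a w (u m) + y m * Fq N (X m) (y m) (u m)"
      unfolding Gq_taylor X_def
      by (subst crux) (use a3 ws in \<open>simp_all add: s_def power2_eq_square algebra_simps\<close>)
    finally have eq0: "0 = u m ^ 4 * Rp N a w (u m) + y m * Fq N (X m) (y m) (u m)" .
    define FF where "FF = Fq N (X m) (y m) (u m)"
    define RR where "RR = Rp N a w (u m)"
    have FF0: "FF > 0" using elim(2) by (simp add: FF_def)
    have e1: "y m * FF = - (u m ^ 4 * RR)" using eq0 unfolding FF_def RR_def by linarith
    have yv: "y m / u m ^ 3 = - (u m * RR) / FF"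
      using e1 FF0 u0 by (simp add: field_simps power2_eq_square power3_eq_cube power4_eq_xxxx)
    have um: "real m powr (-1/3) = u m" by (simp add: u_def)
    have sa: "(N*(2+N)) powr (1/3) = a" by (simp add: a_def s_def)
    have sa5: "(N*(2+N)) powr (5/3) = a^5" using a5 by (simp add: s_def)
    have a3': "a^3 = N*(2+N)" "w*(N*(2+N)) = 1" using a3 ws by (simp_all add: s_def)
    have ps: "pstar_approx (real m) N = X m / u m ^ 2"
      unfolding pstar_approx_def uf(2,3)[OF elim(3)] um sa sa5 X_def
      by (rule pstar_eq[OF a0 a3' u0])
    have pq: "p m = q m / u m ^ 2" using u0 by (simp add: q_def)
    have "(p m - pstar_approx (real m) N) / u m = y m / u m ^ 3"
      unfolding pq ps y_def using u0 by (simp add: field_simps power2_eq_square power3_eq_cube)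
    also have "\<dots> = - (u m * Rp N a w (u m)) / Fq N (X m) (y m) (u m)"
      using yv by (simp add: FF_def RR_def)
    finally show ?case .
  qed
  have "((\<lambda>m. (p m - pstar_approx (real m) N) / u m) \<longlongrightarrow> 0) at_top"
    using tendsto_cong[OF ev] lim by simp
  moreover have "eventually (\<lambda>m. u m \<noteq> 0) at_top"
    using evpos by eventually_elim (simp add: u_def)
  ultimately have "(\<lambda>m. p m - pstar_approx (real m) N) \<in> o[at_top](u)"
    by (rule smalloI_tendsto)
  then show ?thesis unfolding N_def u_def .
qed

end
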